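(* Let $P(X)$ be a complex polynomial of degree $n \geq 2$ and $U(X)$ a quadratic polynomial with non-zero discriminant such that \[ U(X)P''(X) - (n-1)U'(X)P'(X) + \frac{n(n-1)}{2}U''(X)P(X) = 0. \] Set $Y_{1}(X) = 2U(X)P'(X) - nU'(X)P(X)$, $h = \frac{n^{2}-1}{4}\left(U'(X)^{2} - 2U(X)U''(X)\right)$ (a constant) and $\lambda = h/(n^{2}-1)$. Define polynomials $A_{r}(X), B_{r}(X)$ by \[ A_{0} = \tfrac{2h}{3},\quad A_{1} = \tfrac{2(n+1)}{3}\left(UP' - \tfrac{n-1}{2}U'P\right),\quad B_{0} = \tfrac{2hX}{3},\quad B_{1} = XA_{1} - \tfrac{2(n+1)UP}{3}, \] and for $r \geq 1$ \[ \lambda(n(r+1)-1)A_{r+1} = \left(r+\tfrac12\right)Y_{1}A_{r} - (nr+1)P^{2}A_{r-1}, \] \[ \lambda(n(r+1)-1)B_{r+1} = \left(r+\tfrac12\right)Y_{1}B_{r} - (nr+1)P^{2}B_{r-1}. \] Let $a,b,c,d$ be complex numbers with $ad-bc \neq 0$, and define $K_{r}(X) = aA_{r}(X) + bB_{r}(X)$ and $L_{r}(X) = cA_{r}(X) + dB_{r}(X)$. If $x$ is such that $U(x)P(x) \neq 0$, then \[ K_{r+1}(x)L_{r}(x) \neq K_{r}(x)L_{r+1}(x) \] for all $r \geq 0$. *)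

theory Defs
  imports "HOL-Computational_Algebra.Polynomial"
begin

definition quad_discr :: "complex poly \<Rightarrow> complex" where
  "quad_discr U = (coeff U 1)^2 - 4 * coeff U 2 * coeff U 0"

text \<open>n = degree P throughout.\<close>
definition Y1 :: "complex poly \<Rightarrow> complex poly \<Rightarrow> complex poly" where
  "Y1 P U = smult 2 (U * pderiv P) - smult (of_nat (degree P)) (pderiv U * P)"

text \<open>The polynomial h; under the hypotheses it is a constant.\<close>
definition h_poly :: "complex poly \<Rightarrow> complex poly \<Rightarrow> complex poly" where
  "h_poly P U = smult (((of_nat (degree P))^2 - 1) / 4)
      ((pderiv U)^2 - smult 2 (U * pderiv (pderiv U)))"

definition hval :: "complex poly \<Rightarrow> complex poly \<Rightarrow> complex" where
  "hval P U = coeff (h_poly P U) 0"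

definition lam :: "complex poly \<Rightarrow> complex poly \<Rightarrow> complex" where
  "lam P U = hval P U / ((of_nat (degree P))^2 - 1)"

text \<open>Written with index r+1 = Suc (Suc k), i.e. r = k+1.\<close>
fun ABpoly :: "complex poly \<Rightarrow> complex poly \<Rightarrow> complex poly \<Rightarrow> complex poly \<Rightarrow> nat \<Rightarrow> complex poly" where
  "ABpoly P U S0 S1 0 = S0"
| "ABpoly P U S0 S1 (Suc 0) = S1"
| "ABpoly P U S0 S1 (Suc (Suc k)) =
     smult (1 / (lam P U * (of_nat (degree P * (k + 2)) - 1)))
       (smult (of_nat (k + 1) + 1/2) (Y1 P U * ABpoly P U S0 S1 (Suc k))
        - smult (of_nat (degree P * (k + 1) + 1)) (P^2 * ABpoly P U S0 S1 k))"

definition A1 :: "complex poly \<Rightarrow> complex poly \<Rightarrow> complex poly" where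
  "A1 P U = smult (2 * (of_nat (degree P) + 1) / 3)
      (U * pderiv P - smult ((of_nat (degree P) - 1) / 2) (pderiv U * P))"

definition Apoly :: "complex poly \<Rightarrow> complex poly \<Rightarrow> nat \<Rightarrow> complex poly" where
  "Apoly P U = ABpoly P U [:2 * hval P U / 3:] (A1 P U)"

definition Bpoly :: "complex poly \<Rightarrow> complex poly \<Rightarrow> nat \<Rightarrow> complex poly" where
  "Bpoly P U = ABpoly P U [:0, 2 * hval P U / 3:]
      ([:0, 1:] * A1 P U - smult (2 * (of_nat (degree P) + 1) / 3) (U * P))"

end

theory Submission
  imports Defs
begin

lemma hval_eq: "hval P U = (((of_nat (degree P))^2 - 1) / 4) * quad_discr U"
  unfolding hval_def h_poly_def quad_discr_def
  by (simp add: power2_eq_square coeff_mult_0 coeff_pderiv eval_nat_numeral field_simps)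

lemma AB_step: "poly (ABpoly P U S0 S1 (Suc (Suc k))) x =
   (1 / (lam P U * (of_nat (degree P * (k + 2)) - 1))) *
   ((of_nat (k + 1) + 1/2) * poly (Y1 P U) x * poly (ABpoly P U S0 S1 (Suc k)) x
    - of_nat (degree P * (k + 1) + 1) * (poly P x)^2 * poly (ABpoly P U S0 S1 k) x)"
  by (simp add: algebra_simps)

lemma ring_id: "(g*(al*y*s1 - be*q*s0))*t1 - s1*(g*(al*y*t1 - be*q*t0)) = (g*be*q)*(s1*t0 - s0*t1)"
  for g al y s1 be q s0 t1 t0 :: complex
  by (simp add: algebra_simps)

lemma W_step: "poly (ABpoly P U S0 S1 (Suc (Suc k))) x * poly (ABpoly P U T0 T1 (Suc k)) x
   - poly (ABpoly P U S0 S1 (Suc k)) x * poly (ABpoly P U T0 T1 (Suc (Suc k))) x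
  = ((1 / (lam P U * (of_nat (degree P * (k + 2)) - 1))) * of_nat (degree P * (k + 1) + 1) * (poly P x)^2)
   * (poly (ABpoly P U S0 S1 (Suc k)) x * poly (ABpoly P U T0 T1 k) x
      - poly (ABpoly P U S0 S1 k) x * poly (ABpoly P U T0 T1 (Suc k)) x)"
  unfolding AB_step by (rule ring_id)

theorem lemma2p7:
  fixes P U :: "complex poly" and a b c d x :: complex and r :: nat
  assumes "degree P \<ge> 2"
    and "degree U = 2"
    and "quad_discr U \<noteq> 0"
    and "U * pderiv (pderiv P) - smult (of_nat (degree P - 1)) (pderiv U * pderiv P)
         + smult (of_nat (degree P) * (of_nat (degree P) - 1) / 2) (pderiv (pderiv U) * P) = 0"
    and "a * d - b * c \<noteq> 0"
    and "poly U x * poly P x \<noteq> 0"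
  shows "poly (smult a (Apoly P U (Suc r)) + smult b (Bpoly P U (Suc r))) x
           * poly (smult c (Apoly P U r) + smult d (Bpoly P U r)) x
         \<noteq> poly (smult a (Apoly P U r) + smult b (Bpoly P U r)) x
           * poly (smult c (Apoly P U (Suc r)) + smult d (Bpoly P U (Suc r))) x"
proof -
  define n where "n = degree P"
  have n2: "n \<ge> 2" using assms(1) n_def by simp
  have nn: "(of_nat n :: complex)^2 - 1 \<noteq> 0"
  proof
    assume "(of_nat n :: complex)^2 - 1 = 0"
    hence "(of_nat (n^2) :: complex) = of_nat 1" by simp
    hence "n^2 = 1" using of_nat_eq_iff by blast
    thus False using n2 by (simp add: power2_eq_square)
  qed
  have hv0: "(((of_nat n)^2 - 1) / 4) * quad_discr U \<noteq> 0" using nn assms(3) by (metis divide_eq_0_iff mult_eq_0_iff zero_neq_numeral)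
  have hv: "hval P U \<noteq> 0" using hval_eq[of P U] hv0 unfolding n_def by metis
  have lam: "lam P U \<noteq> 0" using hv nn n_def by (simp add: lam_def)
  define W where "W k = poly (Apoly P U (Suc k)) x * poly (Bpoly P U k) x
     - poly (Apoly P U k) x * poly (Bpoly P U (Suc k)) x" for k
  have W0: "W 0 = (2 * hval P U / 3) * (2 * (of_nat n + 1) / 3) * poly U x * poly P x"
    unfolding W_def Apoly_def Bpoly_def n_def by (simp add: algebra_simps)
  have Wsuc: "W (Suc k) = ((1 / (lam P U * (of_nat (n * (k + 2)) - 1))) * of_nat (n * (k + 1) + 1) * (poly P x)^2) * W k" for k
    unfolding W_def Apoly_def Bpoly_def n_def by (rule W_step)
  have Wnz: "W k \<noteq> 0" for k
  proof (induction k)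
    case 0
    have "(of_nat n + 1 :: complex) \<noteq> 0" by (metis of_nat_Suc of_nat_eq_0_iff nat.distinct(1) add.commute)
    thus ?case using hv assms(6) unfolding W0 by (simp only: mult_eq_0_iff divide_eq_0_iff de_Morgan_disj) simp
  next
    case (Suc k)
    have g: "(of_nat (n * (k + 2)) :: complex) - 1 \<noteq> 0"
    proof
      assume "(of_nat (n * (k + 2)) :: complex) - 1 = 0"
      hence "(of_nat (n * (k + 2)) :: complex) = of_nat 1" by simp
      hence "n * (k+2) = 1" using of_nat_eq_iff by blast
      thus False using n2 by simp
    qed
    have "(of_nat (n * (k + 1) + 1) :: complex) \<noteq> 0" using of_nat_eq_0_iff by (metis add_eq_0_iff_both_eq_0 zero_neq_one)
    thus ?case using Suc g lam assms(6) Wsuc by simp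
  qed
  have eq: "poly (smult a (Apoly P U (Suc r)) + smult b (Bpoly P U (Suc r))) x
           * poly (smult c (Apoly P U r) + smult d (Bpoly P U r)) x
         - poly (smult a (Apoly P U r) + smult b (Bpoly P U r)) x
           * poly (smult c (Apoly P U (Suc r)) + smult d (Bpoly P U (Suc r))) x
         = (a * d - b * c) * W r"
    unfolding W_def by (simp add: algebra_simps)
  show ?thesis using eq Wnz[of r] assms(5) by auto
qed

end
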